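(* The real Lie algebra $\mathfrak g=\mathfrak{sl}(2,\mathbb R)\ltimes\mathbb R^2$ admits no inner product with an orthonormal basis consisting of geodesic elements.
   Context: $\mathfrak{sl}(2,\mathbb R)\ltimes\mathbb R^2$ is the semidirect product in which $\mathfrak{sl}(2,\mathbb R)$ acts on the abelian ideal $\mathbb R^2$ by its canonical linear action; equivalently, it is the Lie algebra of real $3\times3$ matrices of trace zero whose third row is zero, with the commutator bracket. For an inner product $\langle\cdot,\cdot\rangle$ on a real Lie algebra $\mathfrak g$, a nonzero $X\in\mathfrak g$ is a geodesic element if $\langle X,[X,Y]\rangle=0$ for all $Y\in\mathfrak g$. *)

theory Defs
  imports "HOL-Analysis.Analysis"
begin

text \<open>The Lie algebra sl(2,R) semidirect R^2, realised as the real 3x3 matrices of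
trace zero whose third row is zero (rows indexed by 1, 2, 3 :: 3), with the
commutator bracket.\<close>

definition slR2 :: "(real^3^3) set" where
  "slR2 = {A. trace A = 0 \<and> A $ 3 = 0}"

definition lie_bracket :: "real^3^3 \<Rightarrow> real^3^3 \<Rightarrow> real^3^3" where
  "lie_bracket X Y = X ** Y - Y ** X"

definition inner_product_on :: "'v::real_vector set \<Rightarrow> ('v \<Rightarrow> 'v \<Rightarrow> real) \<Rightarrow> bool" where
  "inner_product_on V ip \<longleftrightarrow>
     (\<forall>x\<in>V. \<forall>y\<in>V. ip x y = ip y x) \<and>
     (\<forall>x\<in>V. \<forall>y\<in>V. \<forall>z\<in>V. ip (x + y) z = ip x z + ip y z) \<and>
     (\<forall>a. \<forall>x\<in>V. \<forall>z\<in>V. ip (a *\<^sub>R x) z = a * ip x z) \<and>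
     (\<forall>x\<in>V. x \<noteq> 0 \<longrightarrow> ip x x > 0)"

definition geodesic_element ::
  "(real^3^3 \<Rightarrow> real^3^3 \<Rightarrow> real) \<Rightarrow> real^3^3 \<Rightarrow> bool" where
  "geodesic_element ip X \<longleftrightarrow> X \<in> slR2 \<and> X \<noteq> 0 \<and>
     (\<forall>Y\<in>slR2. ip X (lie_bracket X Y) = 0)"

definition orthonormal_basis ::
  "'v::real_vector set \<Rightarrow> ('v \<Rightarrow> 'v \<Rightarrow> real) \<Rightarrow> 'v set \<Rightarrow> bool" where
  "orthonormal_basis V ip B \<longleftrightarrow> B \<subseteq> V \<and> span B = V \<and>
     (\<forall>x\<in>B. \<forall>y\<in>B. ip x y = (if x = y then 1 else 0))"

end

theory Submission
  imports Defs
begin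

definition E1 :: "real^3^3" where "E1 = (\<chi> i j. if i = 1 \<and> j = 1 then 1 else if i = 2 \<and> j = 2 then -1 else 0)"
definition E2 :: "real^3^3" where "E2 = (\<chi> i j. if i = 1 \<and> j = 2 then 1 else 0)"
definition E3 :: "real^3^3" where "E3 = (\<chi> i j. if i = 2 \<and> j = 1 then 1 else 0)"
definition E4 :: "real^3^3" where "E4 = (\<chi> i j. if i = 1 \<and> j = 3 then 1 else 0)"
definition E5 :: "real^3^3" where "E5 = (\<chi> i j. if i = 2 \<and> j = 3 then 1 else 0)"

definition lc :: "real \<Rightarrow> real \<Rightarrow> real \<Rightarrow> real \<Rightarrow> real \<Rightarrow> real^3^3" where
  "lc c1 c2 c3 c4 c5 = c1 *\<^sub>R E1 + c2 *\<^sub>R E2 + c3 *\<^sub>R E3 + c4 *\<^sub>R E4 + c5 *\<^sub>R E5"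

lemma slR2_iff: "X \<in> slR2 \<longleftrightarrow> X$1$1 + X$2$2 + X$3$3 = 0 \<and> X$3$1 = 0 \<and> X$3$2 = 0 \<and> X$3$3 = 0"
  unfolding slR2_def trace_def by (auto simp: sum_3 vec_eq_iff forall_3)

lemma lc_nth: "lc c1 c2 c3 c4 c5 = (\<chi> i j. if i = 1 \<and> j = 1 then c1 else if i = 2 \<and> j = 2 then -c1 else
   if i = 1 \<and> j = 2 then c2 else if i = 2 \<and> j = 1 then c3 else if i = 1 \<and> j = 3 then c4 else if i = 2 \<and> j = 3 then c5 else 0)"
  unfolding lc_def E1_def E2_def E3_def E4_def E5_def by (auto simp: vec_eq_iff forall_3)

lemma lc_sl: "lc c1 c2 c3 c4 c5 \<in> slR2"
  unfolding slR2_iff lc_nth by simp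

lemma sl_expand: "X \<in> slR2 \<Longrightarrow> X = lc (X$1$1) (X$1$2) (X$2$1) (X$1$3) (X$2$3)"
  unfolding slR2_iff lc_nth by (auto simp: vec_eq_iff forall_3)

lemma E_sl: "E1 \<in> slR2" "E2 \<in> slR2" "E3 \<in> slR2" "E4 \<in> slR2" "E5 \<in> slR2"
  using lc_sl[of 1 0 0 0 0] lc_sl[of 0 1 0 0 0] lc_sl[of 0 0 1 0 0] lc_sl[of 0 0 0 1 0] lc_sl[of 0 0 0 0 1]
  by (simp_all add: lc_def)

lemma sl_add: "X \<in> slR2 \<Longrightarrow> Y \<in> slR2 \<Longrightarrow> X + Y \<in> slR2"
  unfolding slR2_iff by simp
lemma sl_scale: "X \<in> slR2 \<Longrightarrow> c *\<^sub>R X \<in> slR2"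
  unfolding slR2_iff by (simp add: distrib_left[symmetric])

lemma br_forms:
  assumes "b \<in> slR2"
  shows "lie_bracket b E1 = lc 0 (-2*b$1$2) (2*b$2$1) (- b$1$3) (b$2$3)"
    "lie_bracket b E2 = lc (- b$2$1) (2*b$1$1) 0 (- b$2$3) 0"
    "lie_bracket b E3 = lc (b$1$2) 0 (-2*b$1$1) 0 (- b$1$3)"
    "lie_bracket b E4 = lc 0 0 0 (b$1$1) (b$2$1)"
    "lie_bracket b E5 = lc 0 0 0 (b$1$2) (- b$1$1)"
  using assms unfolding slR2_iff lc_nth lie_bracket_def
  by (auto simp: vec_eq_iff forall_3 matrix_matrix_mult_def sum_3 E1_def E2_def E3_def E4_def E5_def)

lemma sl_zero: "0 \<in> slR2" unfolding slR2_iff by simp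

lemma sl_sum: "finite t \<Longrightarrow> t \<subseteq> slR2 \<Longrightarrow> (\<Sum>w\<in>t. u w *\<^sub>R w) \<in> slR2"
  by (induction t rule: finite_induct) (auto intro: sl_add sl_scale sl_zero)

lemma ip_lemmas:
  assumes ip: "inner_product_on slR2 ip" and x: "x \<in> slR2" and y: "y \<in> slR2" and z: "z \<in> slR2"
  shows "ip z (x + y) = ip z x + ip z y" "ip z (c *\<^sub>R x) = c * ip z x" "ip z 0 = 0"
    "ip (x + y) z = ip x z + ip y z" "ip (c *\<^sub>R x) z = c * ip x z"
proof -
  have sym: "\<And>u v. u \<in> slR2 \<Longrightarrow> v \<in> slR2 \<Longrightarrow> ip u v = ip v u" using ip unfolding inner_product_on_def by blast
  have ad: "\<And>u v w. u \<in> slR2 \<Longrightarrow> v \<in> slR2 \<Longrightarrow> w \<in> slR2 \<Longrightarrow> ip (u + v) w = ip u w + ip v w"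
    using ip unfolding inner_product_on_def by blast
  have sc: "\<And>a u w. u \<in> slR2 \<Longrightarrow> w \<in> slR2 \<Longrightarrow> ip (a *\<^sub>R u) w = a * ip u w"
    using ip unfolding inner_product_on_def by blast
  show "ip (x + y) z = ip x z + ip y z" using ad x y z by blast
  show "ip (c *\<^sub>R x) z = c * ip x z" using sc x z by blast
  show "ip z (x + y) = ip z x + ip z y"
    using sym[OF z sl_add[OF x y]] ad[OF x y z] sym[OF x z] sym[OF y z] by simp
  show "ip z (c *\<^sub>R x) = c * ip z x"
    using sym[OF z sl_scale[OF x]] sc[OF x z] sym[OF x z] by simp
  show "ip z 0 = 0"
    using sym[OF z sl_zero] sc[OF sl_zero z, of 0] by simp
qed

lemma ip_sum2:
  assumes ip: "inner_product_on slR2 ip" and z: "z \<in> slR2"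
  shows "finite t \<Longrightarrow> t \<subseteq> slR2 \<Longrightarrow> ip z (\<Sum>w\<in>t. u w *\<^sub>R w) = (\<Sum>w\<in>t. u w * ip z w)"
proof (induction t rule: finite_induct)
  case empty
  then show ?case using ip_lemmas(3)[OF ip z z z] by simp
next
  case (insert a F)
  have "ip z (\<Sum>w\<in>insert a F. u w *\<^sub>R w) = ip z (u a *\<^sub>R a + (\<Sum>w\<in>F. u w *\<^sub>R w))"
    using insert by simp
  also have "\<dots> = ip z (u a *\<^sub>R a) + ip z (\<Sum>w\<in>F. u w *\<^sub>R w)"
    using insert by (intro ip_lemmas(1)[OF ip _ _ z]) (auto intro: sl_scale sl_sum)
  also have "\<dots> = u a * ip z a + (\<Sum>w\<in>F. u w * ip z w)"
    using insert ip_lemmas(2)[OF ip _ _ z] by auto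
  finally show ?case using insert by simp
qed

lemma ip_lc:
  assumes ip: "inner_product_on slR2 ip" and z: "z \<in> slR2"
  shows "ip z (lc c1 c2 c3 c4 c5) = c1 * ip z E1 + c2 * ip z E2 + c3 * ip z E3 + c4 * ip z E4 + c5 * ip z E5"
  unfolding lc_def
  using ip_lemmas(2)[OF ip E_sl(1) E_sl(1) z] ip_lemmas(2)[OF ip E_sl(2) E_sl(2) z]
    ip_lemmas(2)[OF ip E_sl(3) E_sl(3) z] ip_lemmas(2)[OF ip E_sl(4) E_sl(4) z]
    ip_lemmas(2)[OF ip E_sl(5) E_sl(5) z]
  by (simp add: ip_lemmas(1)[OF ip _ _ z] E_sl sl_add sl_scale)

lemma elem_alg:
  fixes a p r x y g1 g2 g3 g4 g5 :: real
  assumes e1: "-2*p*g2 + 2*r*g3 - x*g4 + y*g5 = 0"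
    and e2: "-r*g1 + 2*a*g2 - y*g4 = 0"
    and e3: "p*g1 - 2*a*g3 - x*g5 = 0"
    and e4: "a*g4 + r*g5 = 0"
    and e5: "p*g4 - a*g5 = 0"
    and n: "a*g1 + p*g2 + r*g3 + x*g4 + y*g5 = 1"
  shows "(g4^2+g5^2)*(3*(x*g4+y*g5) - 2) = 0"
  using assms by algebra

lemma fin_alg:
  fixes a1 p1 r1 x1 y1 c1 d1 a2 p2 r2 x2 y2 c2 d2 a3 p3 r3 x3 y3 c3 d3 :: real
  assumes ca: "c1*a1+c2*a2+c3*a3 = 0" and cp: "c1*p1+c2*p2+c3*p3 = 0" and cr: "c1*r1+c2*r2+c3*r3 = 0"
    and cx: "c1*x1+c2*x2+c3*x3 = 1" and cy: "c1*y1+c2*y2+c3*y3 = 0"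
    and da: "d1*a1+d2*a2+d3*a3 = 0" and dp: "d1*p1+d2*p2+d3*p3 = 0" and dr: "d1*r1+d2*r2+d3*r3 = 0"
    and dx: "d1*x1+d2*x2+d3*x3 = 0" and dy: "d1*y1+d2*y2+d3*y3 = 1"
    and k1: "c1*a1 + d1*r1 = 0" "c1*p1 - d1*a1 = 0"
    and k2: "c2*a2 + d2*r2 = 0" "c2*p2 - d2*a2 = 0"
    and k3: "c3*a3 + d3*r3 = 0" "c3*p3 - d3*a3 = 0"
    and nz1: "a1 \<noteq> 0 \<or> p1 \<noteq> 0 \<or> r1 \<noteq> 0"
    and nz2: "a2 \<noteq> 0 \<or> p2 \<noteq> 0 \<or> r2 \<noteq> 0"
    and nz3: "a3 \<noteq> 0 \<or> p3 \<noteq> 0 \<or> r3 \<noteq> 0"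
  shows False
proof -
  define w1 where "w1 = c2*d3 - c3*d2"
  define w2 where "w2 = c3*d1 - c1*d3"
  define w3 where "w3 = c1*d2 - c2*d1"
  have W: "w1*(x2*y3-x3*y2) + w2*(x3*y1-x1*y3) + w3*(x1*y2-x2*y1) = 1"
  proof -
    have "w1*(x2*y3-x3*y2) + w2*(x3*y1-x1*y3) + w3*(x1*y2-x2*y1)
      = (c1*x1+c2*x2+c3*x3)*(d1*y1+d2*y2+d3*y3) - (c1*y1+c2*y2+c3*y3)*(d1*x1+d2*x2+d3*x3)"
      unfolding w1_def w2_def w3_def by algebra
    then show ?thesis using cx cy dx dy by simp
  qed
  have par: "z2*w3 - z3*w2 = 0 \<and> z3*w1 - z1*w3 = 0 \<and> z1*w2 - z2*w1 = 0"
    if "c1*z1+c2*z2+c3*z3 = 0" "d1*z1+d2*z2+d3*z3 = 0" for z1 z2 z3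
  proof -
    have "z2*w3 - z3*w2 = c1*(d1*z1+d2*z2+d3*z3) - d1*(c1*z1+c2*z2+c3*z3)"
      "z3*w1 - z1*w3 = c2*(d1*z1+d2*z2+d3*z3) - d2*(c1*z1+c2*z2+c3*z3)"
      "z1*w2 - z2*w1 = c3*(d1*z1+d2*z2+d3*z3) - d3*(c1*z1+c2*z2+c3*z3)"
      unfolding w1_def w2_def w3_def by (simp_all add: algebra_simps)
    then show ?thesis using that by simp
  qed
  note pa = par[OF ca da] and pp = par[OF cp dp] and pr = par[OF cr dr]
  have wnz: "w1 \<noteq> 0 \<or> w2 \<noteq> 0 \<or> w3 \<noteq> 0" using W by auto
  have w1: "w1 \<noteq> 0"
  proof
    assume h: "w1 = 0"
    from wnz h have "w2 \<noteq> 0 \<or> w3 \<noteq> 0" by simp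
    then have "a1 = 0 \<and> p1 = 0 \<and> r1 = 0" using pa pp pr h by (auto simp: algebra_simps)
    then show False using nz1 by simp
  qed
  have w2: "w2 \<noteq> 0"
  proof
    assume h: "w2 = 0"
    then have "a2 = 0 \<and> p2 = 0 \<and> r2 = 0" using w1 pa pp pr h by (auto simp: algebra_simps)
    then show False using nz2 by simp
  qed
  have w3: "w3 \<noteq> 0"
  proof
    assume h: "w3 = 0"
    then have "a3 = 0 \<and> p3 = 0 \<and> r3 = 0" using w1 pa pp pr h by (auto simp: algebra_simps)
    then show False using nz3 by simp
  qed
  have m1: "c2*a1 + d2*r1 = 0"
  proof -
    have "w2*(c2*a1 + d2*r1) = w1*(c2*a2 + d2*r2)" using pa pr by algebra
    then show ?thesis using k2 w2 by simp
  qed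
  have m2: "c2*p1 - d2*a1 = 0"
  proof -
    have "w2*(c2*p1 - d2*a1) = w1*(c2*p2 - d2*a2)" using pa pp by algebra
    then show ?thesis using k2 w2 by simp
  qed
  have "w3*a1 = d2*(c1*a1 + d1*r1) - d1*(c2*a1 + d2*r1)" unfolding w3_def by algebra
  then have A: "a1 = 0" using k1 m1 w3 by simp
  have "w3*r1 = c1*(c2*a1 + d2*r1) - c2*(c1*a1 + d1*r1)" unfolding w3_def by algebra
  then have R: "r1 = 0" using k1 m1 w3 by simp
  have "w3*p1 = d2*(c1*p1 - d1*a1) - d1*(c2*p1 - d2*a1)" unfolding w3_def by algebra
  then have P: "p1 = 0" using k1 m2 w3 by simp
  show False using A R P nz1 by simp
qed

lemma three_aux: "3*(t::real) - 2 = 0 \<Longrightarrow> t = 2/3" by simp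

lemma elem_fact:
  assumes ip: "inner_product_on slR2 ip" and b: "b \<in> slR2" and nb: "ip b b = 1"
    and geo: "\<forall>Y\<in>slR2. ip b (lie_bracket b Y) = 0"
  shows "(ip b E4 = 0 \<and> ip b E5 = 0 \<and> b$1$3 * ip b E4 + b$2$3 * ip b E5 = 0) \<or>
         ((ip b E4 \<noteq> 0 \<or> ip b E5 \<noteq> 0) \<and> b$1$3 * ip b E4 + b$2$3 * ip b E5 = 2/3 \<and>
          b$1$1 * ip b E1 + b$1$2 * ip b E2 + b$2$1 * ip b E3 = 1/3 \<and>
          b$1$1 * ip b E4 + b$2$1 * ip b E5 = 0 \<and> b$1$2 * ip b E4 - b$1$1 * ip b E5 = 0)"
proof -
  have g: "ip b (lie_bracket b E1) = 0" "ip b (lie_bracket b E2) = 0" "ip b (lie_bracket b E3) = 0"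
     "ip b (lie_bracket b E4) = 0" "ip b (lie_bracket b E5) = 0"
    using geo E_sl by auto
  note g' = g[unfolded br_forms[OF b] ip_lc[OF ip b]]
  have n': "b$1$1 * ip b E1 + b$1$2 * ip b E2 + b$2$1 * ip b E3 + b$1$3 * ip b E4 + b$2$3 * ip b E5 = 1"
  proof -
    have "ip b b = ip b (lc (b$1$1) (b$1$2) (b$2$1) (b$1$3) (b$2$3))"
      by (rule arg_cong[where f="ip b", OF sl_expand[OF b]])
    then show ?thesis using nb ip_lc[OF ip b] by simp
  qed
  have e1: "-2*b$1$2*ip b E2 + 2*b$2$1*ip b E3 - b$1$3*ip b E4 + b$2$3*ip b E5 = 0"
    using g'(1) by simp
  have e2: "-b$2$1*ip b E1 + 2*b$1$1*ip b E2 - b$2$3*ip b E4 = 0" using g'(2) by simp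
  have e3: "b$1$2*ip b E1 - 2*b$1$1*ip b E3 - b$1$3*ip b E5 = 0" using g'(3) by simp
  have e4: "b$1$1*ip b E4 + b$2$1*ip b E5 = 0" using g'(4) by simp
  have e5: "b$1$2*ip b E4 - b$1$1*ip b E5 = 0" using g'(5) by simp
  have key: "((ip b E4)^2+(ip b E5)^2)*(3*(b$1$3*ip b E4+b$2$3*ip b E5) - 2) = 0"
    by (rule elem_alg[OF e1 e2 e3 e4 e5 n'])
  show ?thesis
  proof (cases "ip b E4 = 0 \<and> ip b E5 = 0")
    case True then show ?thesis by simp
  next
    case False
    then have nz': "(ip b E4)^2+(ip b E5)^2 \<noteq> 0" by (simp add: sum_power2_eq_zero_iff)
    have "3*(b$1$3*ip b E4+b$2$3*ip b E5) - 2 = 0" using key nz' mult_eq_0_iff by blast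
    then have t: "b$1$3*ip b E4+b$2$3*ip b E5 = 2/3" by (rule three_aux)
    then show ?thesis using False n' e4 e5 by simp
  qed
qed

theorem proposition8p2:
  shows "\<not> (\<exists>ip B. inner_product_on slR2 ip \<and> orthonormal_basis slR2 ip B \<and>
                (\<forall>X\<in>B. geodesic_element ip X))"
proof
  assume "\<exists>ip B. inner_product_on slR2 ip \<and> orthonormal_basis slR2 ip B \<and>
                (\<forall>X\<in>B. geodesic_element ip X)"
  then obtain ip B where ip: "inner_product_on slR2 ip" and onb: "orthonormal_basis slR2 ip B"
    and geo: "\<forall>X\<in>B. geodesic_element ip X" by blast
  have BV: "B \<subseteq> slR2" and spB: "span B = slR2"
    and orth: "\<forall>x\<in>B. \<forall>y\<in>B. ip x y = (if x = y then 1 else 0)"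
    using onb unfolding orthonormal_basis_def by auto
  have indep: "independent B"
  proof
    assume dep: "dependent B"
    obtain t u where t: "finite t" "t \<subseteq> B" "(\<Sum>v\<in>t. u v *\<^sub>R v) = 0" and ex: "\<exists>v\<in>t. u v \<noteq> 0"
      using dep unfolding dependent_explicit by blast
    from ex obtain v where v: "v \<in> t" "u v \<noteq> 0" by blast
    have vV: "v \<in> slR2" using v t BV by blast
    have tV: "t \<subseteq> slR2" using t BV by blast
    have "ip v (\<Sum>w\<in>t. u w *\<^sub>R w) = (\<Sum>w\<in>t. u w * ip v w)"
      by (rule ip_sum2[OF ip vV t(1) tV])
    also have "\<dots> = (\<Sum>w\<in>t. if w = v then u w else 0)"
    proof (rule sum.cong)
      fix w assume w: "w \<in> t"
      have "ip v w = (if v = w then 1 else 0)" using orth v(1) w t(2) by blast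
      then show "u w * ip v w = (if w = v then u w else 0)" by auto
    qed simp
    also have "\<dots> = u v" using t(1) v(1) by simp
    finally have "ip v 0 = u v" using t(3) by simp
    then show False using ip_lemmas(3)[OF ip vV vV vV] v(2) by simp
  qed
  then have finB: "finite B" using independent_bound by blast
  have expand: "x = (\<Sum>b\<in>B. ip b x *\<^sub>R b)" if x: "x \<in> slR2" for x
  proof -
    have "x \<in> span B" using x spB by simp
    then obtain u where u: "x = (\<Sum>v\<in>B. u v *\<^sub>R v)" using span_finite[OF finB] by auto
    have ub: "ip b x = u b" if b: "b \<in> B" for b
    proof -
      have bV: "b \<in> slR2" using b BV by blast
      have "ip b x = (\<Sum>w\<in>B. u w * ip b w)" unfolding u by (rule ip_sum2[OF ip bV finB BV])
      also have "\<dots> = (\<Sum>w\<in>B. if w = b then u w else 0)"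
      proof (rule sum.cong)
        fix w assume w: "w \<in> B"
        have "ip b w = (if b = w then 1 else 0)" using orth b w by blast
        then show "u w * ip b w = (if w = b then u w else 0)" by auto
      qed simp
      also have "\<dots> = u b" using finB b by simp
      finally show ?thesis .
    qed
    have "(\<Sum>b\<in>B. ip b x *\<^sub>R b) = (\<Sum>b\<in>B. u b *\<^sub>R b)"
      by (rule sum.cong) (simp_all add: ub)
    then show ?thesis using u by simp
  qed
  define tt where "tt b = b$1$3 * ip b E4 + b$2$3 * ip b E5" for b
  have ef: "(ip b E4 = 0 \<and> ip b E5 = 0 \<and> tt b = 0) \<or>
         ((ip b E4 \<noteq> 0 \<or> ip b E5 \<noteq> 0) \<and> tt b = 2/3 \<and>
          b$1$1 * ip b E1 + b$1$2 * ip b E2 + b$2$1 * ip b E3 = 1/3 \<and>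
          b$1$1 * ip b E4 + b$2$1 * ip b E5 = 0 \<and> b$1$2 * ip b E4 - b$1$1 * ip b E5 = 0)"
    if b: "b \<in> B" for b
  proof -
    have bV: "b \<in> slR2" using b BV by blast
    have nb: "ip b b = 1" using orth b by simp
    have g: "\<forall>Y\<in>slR2. ip b (lie_bracket b Y) = 0" using geo b unfolding geodesic_element_def by blast
    show ?thesis unfolding tt_def by (rule elem_fact[OF ip bV nb g])
  qed
  have E4e: "E4 = (\<Sum>b\<in>B. ip b E4 *\<^sub>R b)" using expand E_sl by blast
  have E5e: "E5 = (\<Sum>b\<in>B. ip b E5 *\<^sub>R b)" using expand E_sl by blast
  have sum2: "(\<Sum>b\<in>B. tt b) = 2"
  proof -
    have "(\<Sum>b\<in>B. tt b) = (\<Sum>b\<in>B. ip b E4 *\<^sub>R b)$1$3 + (\<Sum>b\<in>B. ip b E5 *\<^sub>R b)$2$3"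
      unfolding tt_def sum_component vector_scaleR_component sum.distrib by (simp add: mult.commute)
    also have "\<dots> = E4$1$3 + E5$2$3" using E4e E5e by simp
    also have "\<dots> = 2" by (simp add: E4_def E5_def)
    finally show ?thesis .
  qed
  define S where "S = {b\<in>B. ip b E4 \<noteq> 0 \<or> ip b E5 \<noteq> 0}"
  have SB: "S \<subseteq> B" and finS: "finite S" using finB unfolding S_def by auto
  have "(\<Sum>b\<in>B. tt b) = (\<Sum>b\<in>S. tt b)"
    using SB finB ef unfolding S_def by (intro sum.mono_neutral_right) auto
  also have "\<dots> = (\<Sum>b\<in>S. 2/3)" using ef unfolding S_def by (intro sum.cong) auto
  also have "\<dots> = real (card S) * (2/3)" by simp
  finally have "card S = 3" using sum2 by simp
  then obtain b1 b2 b3 where S3: "S = {b1, b2, b3}" and dist: "b1 \<noteq> b2" "b2 \<noteq> b3" "b1 \<noteq> b3"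
    unfolding card_3_iff by blast
  have E4s: "E4 = ip b1 E4 *\<^sub>R b1 + ip b2 E4 *\<^sub>R b2 + ip b3 E4 *\<^sub>R b3"
  proof -
    have "E4 = (\<Sum>b\<in>S. ip b E4 *\<^sub>R b)"
      using E4e SB finB unfolding S_def by (simp add: sum.mono_neutral_right)
    then show ?thesis using S3 dist by (simp add: add.assoc)
  qed
  have E5s: "E5 = ip b1 E5 *\<^sub>R b1 + ip b2 E5 *\<^sub>R b2 + ip b3 E5 *\<^sub>R b3"
  proof -
    have "E5 = (\<Sum>b\<in>S. ip b E5 *\<^sub>R b)"
      using E5e SB finB unfolding S_def by (simp add: sum.mono_neutral_right)
    then show ?thesis using S3 dist by (simp add: add.assoc)
  qed
  have inS: "b1 \<in> S" "b2 \<in> S" "b3 \<in> S" using S3 by auto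
  have f1: "tt b1 = 2/3 \<and> b1$1$1 * ip b1 E1 + b1$1$2 * ip b1 E2 + b1$2$1 * ip b1 E3 = 1/3 \<and>
          b1$1$1 * ip b1 E4 + b1$2$1 * ip b1 E5 = 0 \<and> b1$1$2 * ip b1 E4 - b1$1$1 * ip b1 E5 = 0"
    using ef[of b1] inS unfolding S_def by auto
  have f2: "tt b2 = 2/3 \<and> b2$1$1 * ip b2 E1 + b2$1$2 * ip b2 E2 + b2$2$1 * ip b2 E3 = 1/3 \<and>
          b2$1$1 * ip b2 E4 + b2$2$1 * ip b2 E5 = 0 \<and> b2$1$2 * ip b2 E4 - b2$1$1 * ip b2 E5 = 0"
    using ef[of b2] inS unfolding S_def by auto
  have f3: "tt b3 = 2/3 \<and> b3$1$1 * ip b3 E1 + b3$1$2 * ip b3 E2 + b3$2$1 * ip b3 E3 = 1/3 \<and>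
          b3$1$1 * ip b3 E4 + b3$2$1 * ip b3 E5 = 0 \<and> b3$1$2 * ip b3 E4 - b3$1$1 * ip b3 E5 = 0"
    using ef[of b3] inS unfolding S_def by auto
  have nz: "b$1$1 \<noteq> 0 \<or> b$1$2 \<noteq> 0 \<or> b$2$1 \<noteq> 0"
    if "b$1$1 * g1 + b$1$2 * g2 + b$2$1 * g3 = 1/3" for b :: "real^3^3" and g1 g2 g3
    using that by auto
  have c4: "E4$i$j = ip b1 E4 * b1$i$j + ip b2 E4 * b2$i$j + ip b3 E4 * b3$i$j" for i j
    using arg_cong[OF E4s, of "\<lambda>M. M$i$j"] by simp
  have c5: "E5$i$j = ip b1 E5 * b1$i$j + ip b2 E5 * b2$i$j + ip b3 E5 * b3$i$j" for i j
    using arg_cong[OF E5s, of "\<lambda>M. M$i$j"] by simp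
  let ?a1 = "b1$1$1" and ?a2 = "b2$1$1" and ?a3 = "b3$1$1"
  let ?p1 = "b1$1$2" and ?p2 = "b2$1$2" and ?p3 = "b3$1$2"
  let ?r1 = "b1$2$1" and ?r2 = "b2$2$1" and ?r3 = "b3$2$1"
  let ?x1 = "b1$1$3" and ?x2 = "b2$1$3" and ?x3 = "b3$1$3"
  let ?y1 = "b1$2$3" and ?y2 = "b2$2$3" and ?y3 = "b3$2$3"
  let ?c1 = "ip b1 E4" and ?c2 = "ip b2 E4" and ?c3 = "ip b3 E4"
  let ?d1 = "ip b1 E5" and ?d2 = "ip b2 E5" and ?d3 = "ip b3 E5"
  have ca: "?c1*?a1+?c2*?a2+?c3*?a3 = 0" using c4[of 1 1] by (simp add: E4_def)
  have cp: "?c1*?p1+?c2*?p2+?c3*?p3 = 0" using c4[of 1 2] by (simp add: E4_def)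
  have cr: "?c1*?r1+?c2*?r2+?c3*?r3 = 0" using c4[of 2 1] by (simp add: E4_def)
  have cx: "?c1*?x1+?c2*?x2+?c3*?x3 = 1" using c4[of 1 3] by (simp add: E4_def)
  have cy: "?c1*?y1+?c2*?y2+?c3*?y3 = 0" using c4[of 2 3] by (simp add: E4_def)
  have da: "?d1*?a1+?d2*?a2+?d3*?a3 = 0" using c5[of 1 1] by (simp add: E5_def)
  have dp: "?d1*?p1+?d2*?p2+?d3*?p3 = 0" using c5[of 1 2] by (simp add: E5_def)
  have dr: "?d1*?r1+?d2*?r2+?d3*?r3 = 0" using c5[of 2 1] by (simp add: E5_def)
  have dx: "?d1*?x1+?d2*?x2+?d3*?x3 = 0" using c5[of 1 3] by (simp add: E5_def)
  have dy: "?d1*?y1+?d2*?y2+?d3*?y3 = 1" using c5[of 2 3] by (simp add: E5_def)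
  have k1: "?c1*?a1 + ?d1*?r1 = 0" "?c1*?p1 - ?d1*?a1 = 0" using f1 by (simp_all add: mult.commute)
  have k2: "?c2*?a2 + ?d2*?r2 = 0" "?c2*?p2 - ?d2*?a2 = 0" using f2 by (simp_all add: mult.commute)
  have k3: "?c3*?a3 + ?d3*?r3 = 0" "?c3*?p3 - ?d3*?a3 = 0" using f3 by (simp_all add: mult.commute)
  have n1: "?a1 \<noteq> 0 \<or> ?p1 \<noteq> 0 \<or> ?r1 \<noteq> 0" by (rule nz[OF conjunct1[OF conjunct2[OF f1]]])
  have n2: "?a2 \<noteq> 0 \<or> ?p2 \<noteq> 0 \<or> ?r2 \<noteq> 0" by (rule nz[OF conjunct1[OF conjunct2[OF f2]]])
  have n3: "?a3 \<noteq> 0 \<or> ?p3 \<noteq> 0 \<or> ?r3 \<noteq> 0" by (rule nz[OF conjunct1[OF conjunct2[OF f3]]])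
  show False by (rule fin_alg[OF ca cp cr cx cy da dp dr dx dy k1 k2 k3 n1 n2 n3])
qed

end
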